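(* Let $K$ be a random string in $\{0,1\}^N$ (with arbitrary distribution), and let $p_1,\dots,p_d\in\{1,\dots,N\}$ be fixed probes. Let $c'$ be a Bernoulli$(1/2)$ random variable and for $S\subseteq\{1,\dots,d\}$ define $c(S) := \bigoplus_{i\in S} K[p_i]$ and $d(S) := \|\mathcal L(c(S)) - \mathcal L(c')\|_{TV}$. If $\mathcal S$ is a uniformly random subset of $\{1,\dots,d\}$, then \[ \mathbb E\big[d(\mathcal S)\big] \le \frac12\sqrt{\sum_{y\in\{0,1\}^d}\mathbb P\big((K[p_1],\dots,K[p_d]) = y\big)^2}. \]
   Context: $K[i]$ denotes the $i$-th bit of $K$. For probability distributions $\mu,\nu$ on a finite set $\Omega$, $\|\mu-\nu\|_{TV} = \frac12\sum_{x\in\Omega}|\mu(x)-\nu(x)|$; $\mathcal L(Z)$ is the law of $Z$. *)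

theory Defs
  imports "HOL-Probability.Probability"
begin

definition tv_dist :: "'a::finite pmf \<Rightarrow> 'a pmf \<Rightarrow> real" where
  "tv_dist \<mu> \<nu> = (1/2) * (\<Sum>x\<in>UNIV. \<bar>pmf \<mu> x - pmf \<nu> x\<bar>)"

text \<open>Bit i (1-based) of a string k in {0,1}^N, represented as a bool list of length N.\<close>
definition bit_at :: "bool list \<Rightarrow> nat \<Rightarrow> bool" where
  "bit_at k i = k ! (i - 1)"

definition xor_set :: "nat set \<Rightarrow> (nat \<Rightarrow> bool) \<Rightarrow> bool" where
  "xor_set S f = odd (card {i\<in>S. f i})"

definition cS :: "(nat \<Rightarrow> nat) \<Rightarrow> nat set \<Rightarrow> bool list \<Rightarrow> bool" where
  "cS p S k = xor_set S (\<lambda>i. bit_at k (p i))"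

definition dS :: "bool list pmf \<Rightarrow> (nat \<Rightarrow> nat) \<Rightarrow> nat set \<Rightarrow> real" where
  "dS K p S = tv_dist (map_pmf (cS p S) K) (bernoulli_pmf (1/2))"

definition probe_vec :: "(nat \<Rightarrow> nat) \<Rightarrow> nat \<Rightarrow> bool list \<Rightarrow> bool list" where
  "probe_vec p d k = map (\<lambda>i. bit_at k (p i)) [1..<d+1]"

end

theory Submission
  imports Defs
begin

definition chi :: "nat set \<Rightarrow> bool list \<Rightarrow> real" where
  "chi S y = (\<Prod>i\<in>S. if y!(i-1) then -1 else 1)"

lemma sum_pow_prod:
  fixes g :: "nat \<Rightarrow> real"
  assumes "finite A"
  shows "(\<Sum>S\<in>Pow A. \<Prod>i\<in>S. g i) = (\<Prod>i\<in>A. g i + 1)"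
  using prod_add[OF assms, of g "\<lambda>_. 1"] by simp

lemma orth:
  assumes "length y = d" "length z = d"
  shows "(\<Sum>S\<in>Pow {1..d}. chi S y * chi S z) = (if y = z then 2^d else 0)"
proof -
  have "(\<Sum>S\<in>Pow {1..d}. chi S y * chi S z)
      = (\<Sum>S\<in>Pow {1..d}. \<Prod>i\<in>S. (if y!(i-1) then -1 else 1) * (if z!(i-1) then -1 else 1))"
    unfolding chi_def by (simp add: prod.distrib)
  also have "\<dots> = (\<Prod>i\<in>{1..d}. (if y!(i-1) then -1 else 1) * (if z!(i-1) then -1 else 1) + 1)"
    by (rule sum_pow_prod) simp
  also have "\<dots> = (if y = z then 2^d else 0)"
  proof (cases "y = z")
    case True
    have "(\<Prod>i\<in>{1..d}. (if y!(i-1) then -1 else 1) * (if z!(i-1) then -1 else 1) + 1) = (\<Prod>i\<in>{1..d}. (2::real))"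
      using True by (intro prod.cong) auto
    then show ?thesis using True by simp
  next
    case False
    then obtain j where j: "j < d" "y!j \<noteq> z!j" using assms nth_equalityI[of y z] by auto
    have "Suc j \<in> {1..d}" using j by auto
    moreover have "(if y!(Suc j-1) then -1 else 1) * (if z!(Suc j-1) then -1 else 1) + 1 = (0::real)"
      using j by auto
    ultimately show ?thesis using False by (metis (no_types, lifting) finite_atLeastAtMost prod_zero_iff)
  qed
  finally show ?thesis .
qed

lemma chi_xor: "chi S y = (if xor_set S (\<lambda>i. y!(i-1)) then -1 else 1)" if "finite S"
proof -
  have "chi S y = (\<Prod>i\<in>{i\<in>S. y!(i-1)}. -1)"
    unfolding chi_def using that by (simp add: prod.If_cases Int_def conj_commute)
  also have "\<dots> = (-1) ^ card {i\<in>S. y!(i-1)}" by simp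
  finally have "chi S y = (-1) ^ card {i\<in>S. y!(i-1)}" .
  then show ?thesis unfolding xor_set_def by simp
qed

lemma finY: "finite {ys::bool list. length ys = d}"
  using finite_lists_length_eq[of "UNIV::bool set" d] by simp

lemma dS_eq:
  fixes Q :: "bool list pmf"
  assumes Q: "Q = map_pmf (probe_vec p d) K" and S: "S \<subseteq> {1..d}"
  shows "dS K p S = (1/2) * \<bar>\<Sum>y\<in>{ys::bool list. length ys = d}. pmf Q y * chi S y\<bar>"
proof -
  define h where "h y = xor_set S (\<lambda>i. y!(i-1))" for y :: "bool list"
  have finS: "finite S" using S finite_subset by blast
  have setQ: "set_pmf Q \<subseteq> {ys. length ys = d}" using Q by (auto simp: probe_vec_def)
  have eqc: "cS p S k = h (probe_vec p d k)" for k
  proof -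
    have pv: "probe_vec p d k ! (i-1) = bit_at k (p i)" if "i \<in> {1..d}" for i
      unfolding probe_vec_def using that by (subst nth_map) (auto simp del: upt_Suc)
    have "{i\<in>S. bit_at k (p i)} = {i\<in>S. probe_vec p d k ! (i-1)}"
      using S pv by auto
    then show ?thesis unfolding cS_def h_def xor_set_def by simp
  qed
  define M where "M = map_pmf h Q"
  have MM: "map_pmf (cS p S) K = M"
    unfolding M_def Q map_pmf_comp by (simp add: eqc[abs_def] o_def)
  have s1: "pmf M True + pmf M False = 1"
    using sum_pmf_eq_1[OF finite subset_UNIV, of M] by (simp add: UNIV_bool add.commute)
  have "(\<Sum>y\<in>{ys::bool list. length ys = d}. pmf Q y * chi S y)
      = measure_pmf.expectation Q (\<lambda>y. if h y then -1 else 1::real)"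
    by (subst integral_measure_pmf[OF finY, of Q]) (use setQ in \<open>auto simp: chi_xor[OF finS] h_def\<close>)
  also have "\<dots> = measure_pmf.expectation M (\<lambda>b. if b then -1 else 1::real)"
    unfolding M_def by simp
  also have "\<dots> = pmf M False - pmf M True"
    by (subst integral_measure_pmf[of UNIV]) (auto simp: UNIV_bool)
  finally have F: "(\<Sum>y\<in>{ys::bool list. length ys = d}. pmf Q y * chi S y) = pmf M False - pmf M True" .
  have "dS K p S = (1/2) * (\<bar>pmf M True - 1/2\<bar> + \<bar>pmf M False - 1/2\<bar>)"
    unfolding dS_def tv_dist_def MM by (simp add: UNIV_bool)
  then show ?thesis using F s1 by simp
qed

lemma parseval:
  fixes a :: "bool list \<Rightarrow> real"
  shows "(\<Sum>S\<in>Pow {1..d}. (\<Sum>y\<in>{ys::bool list. length ys = d}. a y * chi S y)\<^sup>2)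
     = 2^d * (\<Sum>y\<in>{ys::bool list. length ys = d}. (a y)\<^sup>2)"
proof -
  let ?Y = "{ys::bool list. length ys = d}"
  have "(\<Sum>S\<in>Pow {1..d}. (\<Sum>y\<in>?Y. a y * chi S y)\<^sup>2)
      = (\<Sum>S\<in>Pow {1..d}. \<Sum>y\<in>?Y. \<Sum>z\<in>?Y. a y * a z * (chi S y * chi S z))"
    by (simp add: power2_eq_square sum_product mult_ac)
  also have "\<dots> = (\<Sum>y\<in>?Y. \<Sum>z\<in>?Y. \<Sum>S\<in>Pow {1..d}. a y * a z * (chi S y * chi S z))"
    by (subst sum.swap) (subst sum.swap, simp)
  also have "\<dots> = (\<Sum>y\<in>?Y. \<Sum>z\<in>?Y. a y * a z * (if y = z then 2^d else 0))"
  proof (intro sum.cong refl)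
    fix y z assume "y \<in> ?Y" "z \<in> ?Y"
    then show "(\<Sum>S\<in>Pow {1..d}. a y * a z * (chi S y * chi S z)) = a y * a z * (if y = z then 2^d else 0)"
      by (simp only: sum_distrib_left[symmetric] orth mem_Collect_eq)
  qed
  also have "\<dots> = (\<Sum>y\<in>?Y. 2^d * (a y)\<^sup>2)"
    by (intro sum.cong refl) (simp add: if_distrib sum.delta finY power2_eq_square cong: if_cong)
  finally show ?thesis by (simp add: sum_distrib_left)
qed

theorem corollary1:
  fixes K :: "bool list pmf" and N d :: nat and p :: "nat \<Rightarrow> nat"
  assumes "\<forall>k\<in>set_pmf K. length k = N"
    and "\<forall>i\<in>{1..d}. p i \<in> {1..N}"
  shows "measure_pmf.expectation (pmf_of_set (Pow {1..d})) (dS K p)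
    \<le> (1/2) * sqrt (\<Sum>y\<in>{ys::bool list. length ys = d}.
                       (measure_pmf.prob K {k. probe_vec p d k = y})\<^sup>2)"
proof -
  define Q where "Q = map_pmf (probe_vec p d) K"
  let ?Y = "{ys::bool list. length ys = d}"
  define F where "F S = (\<Sum>y\<in>?Y. pmf Q y * chi S y)" for S
  define T where "T = (\<Sum>y\<in>?Y. (pmf Q y)\<^sup>2)"
  have T: "T = (\<Sum>y\<in>?Y. (measure_pmf.prob K {k. probe_vec p d k = y})\<^sup>2)"
    unfolding T_def Q_def by (simp add: pmf_map vimage_def)
  have T0: "T \<ge> 0" unfolding T_def by (simp add: sum_nonneg)
  have cP: "card (Pow {1..d::nat}) = 2^d" by (simp add: card_Pow)
  have E: "measure_pmf.expectation (pmf_of_set (Pow {1..d})) (dS K p)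
      = (\<Sum>S\<in>Pow {1..d}. (1/2) * \<bar>F S\<bar>) / 2^d"
    by (subst integral_pmf_of_set) (auto simp: cP card_Pow F_def dS_eq[OF Q_def] intro!: sum.cong)
  have CS: "(\<Sum>S\<in>Pow {1..d}. \<bar>F S\<bar> * 1)\<^sup>2 \<le> (\<Sum>S\<in>Pow {1..d}. \<bar>F S\<bar>\<^sup>2) * (\<Sum>S\<in>Pow {1..d::nat}. 1\<^sup>2)"
    by (rule Cauchy_Schwarz_ineq_sum)
  have "(\<Sum>S\<in>Pow {1..d}. \<bar>F S\<bar>)\<^sup>2 \<le> (2^d * T) * 2^d"
    using CS parseval[of "pmf Q" d] unfolding F_def T_def by (simp add: cP card_Pow)
  also have "\<dots> = (2^d * sqrt T)\<^sup>2" using T0 by (simp add: power_mult_distrib power2_eq_square)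
  finally have "(\<Sum>S\<in>Pow {1..d}. \<bar>F S\<bar>) \<le> 2^d * sqrt T"
    by (rule power2_le_imp_le) (simp add: T0)
  then have "(\<Sum>S\<in>Pow {1..d}. (1/2) * \<bar>F S\<bar>) / 2^d \<le> (1/2) * sqrt T"
    by (simp add: sum_divide_distrib[symmetric] mult.commute pos_divide_le_eq)
  then show ?thesis using E T by simp
qed

end
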